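(* Let $K\ge3$, $N\ge1$, let $\mathcal{D}_1,\dots,\mathcal{D}_K$ be subpopulations and $\mathcal{A}$ a learning algorithm, and assume the tasks are independent, i.e. each error function $e_k$ depends only on $n_k$. If there exists $k\in[K]$ such that $e_k$ is not a constant function on $[N]=\{1,\dots,N\}$, then there exists a set $U\subseteq\Delta_K$ of measure zero such that for all ${\bm{p}}\in\Delta_K\setminus U$ there is ${\bm{q}}^*\neq{\bm{p}}$ with $$L_N({\bm{p}},{\bm{q}}^* )=L^*({\bm{p}})<L^{\mathrm{same}}({\bm{p}}).$$
   Context: Setting: distributions $\mathcal{D}_1,\dots,\mathcal{D}_K$ on $\mathcal{Z}$, a loss $\ell(h,{\bm{z}})$ and a learning algorithm $\mathcal{A}$ mapping datasets in $\mathcal{Z}^N$ to models. For ${\bm{n}}\in\mathbb{Z}_{\ge0}^K$ with $\sum_kn_k=N$, let $\boldsymbol{\mathcal{D}}^{\bm{n}}=\mathcal{D}_1^{n_1}\times\dots\times\mathcal{D}_K^{n_K}$ and $e_k({\bm{n}})=\mathbb{E}_{S\sim\boldsymbol{\mathcal{D}}^{\bm{n}}}\mathbb{E}_{{\bm{z}}\sim\mathcal{D}_k}[\ell(\mathcal{A}(S),{\bm{z}})]$; independence means $e_k({\bm{n}})=e_k(n_k)$. For ${\bm{q}}\in\Delta_K=\{{\bm{r}}\ge0:\sum_kr_k=1\}$, training on $N$ i.i.d. samples from $\sum_kq_k\mathcal{D}_k$ gives ${\bm{n}}\sim\mathrm{Mult}(N,{\bm{q}})$ and expected test loss $L_N({\bm{p}},{\bm{q}})=\sum_kp_k\mathbb{E}_{{\bm{n}}\sim\mathrm{Mult}(N,{\bm{q}})}[e_k(n_k)]$;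 $L^{\mathrm{same}}({\bm{p}})=L_N({\bm{p}},{\bm{p}})$ and $L^*({\bm{p}})=\min_{{\bm{q}}\in\Delta_K}L_N({\bm{p}},{\bm{q}})$. Measure on $\Delta_K$ is Lebesgue measure on the simplex. *)

theory Defs
  imports "HOL-Analysis.Analysis"
begin

definition prob_simplex :: "nat \<Rightarrow> (nat \<Rightarrow> real) set" where
  "prob_simplex K = {p. (\<forall>i<K. 0 \<le> p i) \<and> (\<forall>i. K \<le> i \<longrightarrow> p i = 0) \<and> (\<Sum>i<K. p i) = 1}"

definition compositions :: "nat \<Rightarrow> nat \<Rightarrow> (nat \<Rightarrow> nat) set" where
  "compositions K N = {n. (\<forall>i. K \<le> i \<longrightarrow> n i = 0) \<and> (\<Sum>i<K. n i) = N}"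

definition mult_pmf :: "nat \<Rightarrow> nat \<Rightarrow> (nat \<Rightarrow> real) \<Rightarrow> (nat \<Rightarrow> nat) \<Rightarrow> real" where
  "mult_pmf K N q n = fact N / (\<Prod>i<K. fact (n i)) * (\<Prod>i<K. q i ^ n i)"

text \<open>Expected test loss L_N(p,q) under independence: e k m is e_k(m).\<close>

definition L_N :: "nat \<Rightarrow> nat \<Rightarrow> (nat \<Rightarrow> nat \<Rightarrow> real) \<Rightarrow> (nat \<Rightarrow> real) \<Rightarrow> (nat \<Rightarrow> real) \<Rightarrow> real" where
  "L_N K N e p q = (\<Sum>k<K. p k * (\<Sum>n\<in>compositions K N. mult_pmf K N q n * e k (n k)))"

definition L_same :: "nat \<Rightarrow> nat \<Rightarrow> (nat \<Rightarrow> nat \<Rightarrow> real) \<Rightarrow> (nat \<Rightarrow> real) \<Rightarrow> real" where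
  "L_same K N e p = L_N K N e p p"

definition L_star :: "nat \<Rightarrow> nat \<Rightarrow> (nat \<Rightarrow> nat \<Rightarrow> real) \<Rightarrow> (nat \<Rightarrow> real) \<Rightarrow> real" where
  "L_star K N e p = (INF q\<in>prob_simplex K. L_N K N e p q)"

text \<open>Lebesgue measure on the simplex: via the chart sending x in R^{K-1}
  (coordinates 0..K-2) to (x_0,...,x_{K-2}, 1 - sum x_j).\<close>

definition simplex_chart :: "nat \<Rightarrow> (nat \<Rightarrow> real) \<Rightarrow> (nat \<Rightarrow> real)" where
  "simplex_chart K x = (\<lambda>i. if i < K - 1 then x i
                            else if i = K - 1 then 1 - (\<Sum>j<K - 1. x j) else 0)"

definition simplex_null :: "nat \<Rightarrow> (nat \<Rightarrow> real) set \<Rightarrow> bool" where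
  "simplex_null K U \<longleftrightarrow>
     {x \<in> space (Pi\<^sub>M {..<K - 1} (\<lambda>_. lborel)). simplex_chart K x \<in> U}
       \<in> null_sets (Pi\<^sub>M {..<K - 1} (\<lambda>_. lborel))"

end

theory Submission
  imports Defs "HOL-Computational_Algebra.Polynomial"
begin


lemma comp_0: "compositions 0 N = (if N = 0 then {\<lambda>_. 0} else {})"
  by (auto simp: compositions_def)

lemma comp_Suc: "compositions (Suc K) N = (\<lambda>(m,n). n(K:=m)) ` (SIGMA m:{..N}. compositions K (N - m))"
proof (rule set_eqI, rule iffI)
  fix n assume n: "n \<in> compositions (Suc K) N"
  have s: "(\<Sum>i<K. n i) + n K = N" using n by (simp add: compositions_def)
  have "(\<Sum>i<K. (n(K:=0)) i) = (\<Sum>i<K. n i)" by (rule sum.cong) auto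
  then have "n(K:=0) \<in> compositions K (N - n K)" using n s
    by (auto simp: compositions_def)
  moreover have "n = (n(K:=0))(K := n K)" by simp
  ultimately show "n \<in> (\<lambda>(m,n). n(K:=m)) ` (SIGMA m:{..N}. compositions K (N - m))"
    using s by (intro image_eqI[where x="(n K, n(K:=0))"]) auto
next
  fix n assume "n \<in> (\<lambda>(m,n). n(K:=m)) ` (SIGMA m:{..N}. compositions K (N - m))"
  then obtain m n' where m: "m \<le> N" and n': "n' \<in> compositions K (N - m)" and nn: "n = n'(K:=m)" by auto
  have "(\<Sum>i<K. (n'(K:=m)) i) = (\<Sum>i<K. n' i)" by (rule sum.cong) auto
  then show "n \<in> compositions (Suc K) N" using m n' nn by (auto simp: compositions_def)
qed

lemma comp_inj: "inj_on (\<lambda>(m,n). n(K:=m)) (SIGMA m:{..N}. compositions K (N - m))"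
proof (rule inj_onI, clarsimp)
  fix m n m' n' assume "n \<in> compositions K (N - m)" "n' \<in> compositions K (N - m')"
    and e: "n(K := m) = n'(K := m')"
  then have z: "n K = 0" "n' K = 0" by (auto simp: compositions_def)
  have "m = m'" using fun_cong[OF e, of K] by simp
  moreover have "n = n'"
  proof
    fix i show "n i = n' i" using fun_cong[OF e, of i] z by (cases "i = K") auto
  qed
  ultimately show "m = m' \<and> n = n'" by simp
qed

lemma finite_comp: "finite (compositions K N)"
proof (induction K arbitrary: N)
  case 0 then show ?case by (simp add: comp_0)
next
  case (Suc K) then show ?case by (simp add: comp_Suc)
qed

lemma multinomial:
  fixes y :: "nat \<Rightarrow> real"
  shows "(\<Sum>n\<in>compositions K N. fact N / (\<Prod>i<K. fact (n i)) * (\<Prod>i<K. y i ^ n i)) = (\<Sum>i<K. y i) ^ N"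
proof (induction K arbitrary: N)
  case 0 then show ?case by (simp add: comp_0)
next
  case (Suc K)
  have "(\<Sum>n\<in>compositions (Suc K) N. fact N / (\<Prod>i<Suc K. fact (n i)) * (\<Prod>i<Suc K. y i ^ n i))
     = (\<Sum>(m,n)\<in>(SIGMA m:{..N}. compositions K (N - m)). fact N / (\<Prod>i<Suc K. fact ((n(K:=m)) i)) * (\<Prod>i<Suc K. y i ^ (n(K:=m)) i))"
    unfolding comp_Suc by (subst sum.reindex[OF comp_inj]) (simp add: case_prod_unfold)
  also have "\<dots> = (\<Sum>m\<le>N. \<Sum>n\<in>compositions K (N - m). fact N / (\<Prod>i<Suc K. fact ((n(K:=m)) i)) * (\<Prod>i<Suc K. y i ^ (n(K:=m)) i))"
    by (rule sum.Sigma[symmetric]) (auto simp: finite_comp)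
  also have "\<dots> = (\<Sum>m\<le>N. of_nat (N choose m) * y K ^ m * (\<Sum>n\<in>compositions K (N - m). fact (N - m) / (\<Prod>i<K. fact (n i)) * (\<Prod>i<K. y i ^ n i)))"
  proof (rule sum.cong[OF refl])
    fix m assume m: "m \<in> {..N}"
    have fNn: "fact N = (N choose m) * fact m * fact (N - m)"
      using binomial_fact_lemma[of m N] m by (simp add: algebra_simps)
    have fN: "(fact N :: real) = of_nat (N choose m) * fact m * fact (N - m)"
    proof -
      have "real (fact N) = real ((N choose m) * fact m * fact (N - m))" using fNn by simp
      then show ?thesis by (simp only: of_nat_mult of_nat_fact)
    qed
    show "(\<Sum>n\<in>compositions K (N - m). fact N / (\<Prod>i<Suc K. fact ((n(K:=m)) i)) * (\<Prod>i<Suc K. y i ^ (n(K:=m)) i))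
      = of_nat (N choose m) * y K ^ m * (\<Sum>n\<in>compositions K (N - m). fact (N - m) / (\<Prod>i<K. fact (n i)) * (\<Prod>i<K. y i ^ n i))"
      unfolding sum_distrib_left
    proof (rule sum.cong[OF refl])
      fix n assume n: "n \<in> compositions K (N - m)"
      have p1: "(\<Prod>i<K. fact ((n(K:=m)) i)) = (\<Prod>i<K. (fact (n i) :: real))" by (rule prod.cong) auto
      have p2: "(\<Prod>i<K. y i ^ (n(K:=m)) i) = (\<Prod>i<K. y i ^ n i)" by (rule prod.cong) auto
      show "fact N / (\<Prod>i<Suc K. fact ((n(K:=m)) i)) * (\<Prod>i<Suc K. y i ^ (n(K:=m)) i)
        = of_nat (N choose m) * y K ^ m * (fact (N - m) / (\<Prod>i<K. fact (n i)) * (\<Prod>i<K. y i ^ n i))"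
      proof -
        have a: "(\<Prod>i<Suc K. fact ((n(K:=m)) i)) = (\<Prod>i<K. (fact (n i) :: real)) * fact m"
          using p1 by simp
        have b: "(\<Prod>i<Suc K. y i ^ (n(K:=m)) i) = (\<Prod>i<K. y i ^ n i) * y K ^ m"
          using p2 by simp
        have c: "(\<Prod>i<K. (fact (n i) :: real)) \<noteq> 0" by (simp add: prod_zero_iff)
        show ?thesis unfolding a b fN using c by (simp add: field_simps)
      qed
    qed
  qed
  also have "\<dots> = (\<Sum>m\<le>N. of_nat (N choose m) * y K ^ m * (\<Sum>i<K. y i) ^ (N - m))"
    by (simp only: Suc.IH)
  also have "\<dots> = (y K + (\<Sum>i<K. y i)) ^ N" by (simp add: binomial_ring)
  finally show ?case by (simp add: add.commute)
qed


lemma comp_le: "n \<in> compositions K N \<Longrightarrow> k < K \<Longrightarrow> n k \<le> N"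
  unfolding compositions_def using member_le_sum[of k "{..<K}" n] by auto

lemma marginal_gen:
  fixes q :: "nat \<Rightarrow> real"
  assumes k: "k < K"
  shows "(\<Sum>n\<in>compositions K N. mult_pmf K N q n * z ^ (n k)) = (q k * z + ((\<Sum>i<K. q i) - q k)) ^ N"
proof -
  define y where "y = q(k := q k * z)"
  have kK: "k \<in> {..<K}" using k by simp
  have sy: "(\<Sum>i<K. y i) = q k * z + ((\<Sum>i<K. q i) - q k)"
  proof -
    have "(\<Sum>i<K. y i) = y k + (\<Sum>i\<in>{..<K} - {k}. y i)" by (rule sum.remove[OF _ kK]) simp
    also have "(\<Sum>i\<in>{..<K} - {k}. y i) = (\<Sum>i\<in>{..<K} - {k}. q i)" by (rule sum.cong) (auto simp: y_def)
    also have "(\<Sum>i\<in>{..<K} - {k}. q i) = (\<Sum>i<K. q i) - q k" using sum.remove[OF _ kK, of q] by simp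
    finally show ?thesis by (simp add: y_def)
  qed
  have py: "(\<Prod>i<K. y i ^ n i) = (\<Prod>i<K. q i ^ n i) * z ^ (n k)" for n :: "nat \<Rightarrow> nat"
  proof -
    have "(\<Prod>i<K. y i ^ n i) = y k ^ n k * (\<Prod>i\<in>{..<K} - {k}. y i ^ n i)" by (rule prod.remove[OF _ kK]) simp
    also have "(\<Prod>i\<in>{..<K} - {k}. y i ^ n i) = (\<Prod>i\<in>{..<K} - {k}. q i ^ n i)" by (rule prod.cong) (auto simp: y_def)
    also have "(\<Prod>i<K. q i ^ n i) = q k ^ n k * (\<Prod>i\<in>{..<K} - {k}. q i ^ n i)" by (rule prod.remove[OF _ kK]) simp
    moreover have "y k ^ n k = q k ^ n k * z ^ n k" by (simp add: y_def power_mult_distrib)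
    ultimately show ?thesis by simp
  qed
  have "(\<Sum>n\<in>compositions K N. mult_pmf K N q n * z ^ (n k))
      = (\<Sum>n\<in>compositions K N. fact N / (\<Prod>i<K. fact (n i)) * (\<Prod>i<K. y i ^ n i))"
    by (rule sum.cong) (simp_all add: mult_pmf_def py)
  also have "\<dots> = (\<Sum>i<K. y i) ^ N" by (rule multinomial)
  finally show ?thesis using sy by simp
qed

lemma marginal:
  fixes q :: "nat \<Rightarrow> real"
  assumes k: "k < K" and s: "(\<Sum>i<K. q i) = 1"
  shows "(\<Sum>n\<in>compositions K N. mult_pmf K N q n * g (n k))
       = (\<Sum>m\<le>N. of_nat (N choose m) * q k ^ m * (1 - q k) ^ (N - m) * g m)"
proof -
  define A where "A m = (\<Sum>n\<in>{n. n \<in> compositions K N \<and> n k = m}. mult_pmf K N q n)" for m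
  define B where "B m = of_nat (N choose m) * q k ^ m * (1 - q k) ^ (N - m)" for m
  have img: "(\<lambda>n. n k) ` compositions K N \<subseteq> {..N}" using comp_le k by auto
  have grp: "(\<Sum>n\<in>compositions K N. h n) = (\<Sum>m\<le>N. \<Sum>n\<in>{n. n \<in> compositions K N \<and> n k = m}. h n)" for h :: "(nat \<Rightarrow> nat) \<Rightarrow> real"
    by (rule sum.group[OF finite_comp _ img, symmetric]) simp
  have "(\<Sum>m\<le>N. A m * z ^ m) = (\<Sum>m\<le>N. B m * z ^ m)" for z :: real
  proof -
    have "(\<Sum>m\<le>N. A m * z ^ m) = (\<Sum>m\<le>N. \<Sum>n\<in>{n. n \<in> compositions K N \<and> n k = m}. mult_pmf K N q n * z ^ (n k))"
      unfolding A_def sum_distrib_right by (rule sum.cong[OF refl], rule sum.cong) auto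
    also have "\<dots> = (\<Sum>n\<in>compositions K N. mult_pmf K N q n * z ^ (n k))" by (rule grp[symmetric])
    also have "\<dots> = (q k * z + (1 - q k)) ^ N" using marginal_gen[OF k] s by simp
    also have "\<dots> = (\<Sum>m\<le>N. B m * z ^ m)" unfolding binomial_ring B_def
      by (rule sum.cong) (simp_all add: power_mult_distrib algebra_simps)
    finally show ?thesis .
  qed
  then have AB: "\<forall>m\<le>N. A m = B m" using polyfun_eq_coeffs[of A N B] by blast
  have "(\<Sum>n\<in>compositions K N. mult_pmf K N q n * g (n k)) = (\<Sum>m\<le>N. \<Sum>n\<in>{n. n \<in> compositions K N \<and> n k = m}. mult_pmf K N q n * g (n k))"
    by (rule grp)
  also have "\<dots> = (\<Sum>m\<le>N. A m * g m)"
    unfolding A_def sum_distrib_right by (rule sum.cong[OF refl], rule sum.cong) auto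
  also have "\<dots> = (\<Sum>m\<le>N. B m * g m)" using AB by simp
  finally show ?thesis by (simp add: B_def)
qed



definition Fp :: "nat \<Rightarrow> (nat \<Rightarrow> nat \<Rightarrow> real) \<Rightarrow> nat \<Rightarrow> real poly" where
  "Fp N e k = (\<Sum>m\<le>N. smult (of_nat (N choose m) * e k m) ([:0,1:]^m * [:1,-1:]^(N-m)))"

lemma poly_Fp: "poly (Fp N e k) t = (\<Sum>m\<le>N. of_nat (N choose m) * t ^ m * (1 - t) ^ (N - m) * e k m)"
  unfolding Fp_def by (simp add: poly_sum algebra_simps)

lemma L_decomp:
  assumes "(\<Sum>i<K. q i) = 1"
  shows "L_N K N e p q = (\<Sum>k<K. p k * poly (Fp N e k) (q k))"
  unfolding L_N_def poly_Fp
proof (rule sum.cong[OF refl])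
  fix k assume "k \<in> {..<K}"
  then have "(\<Sum>n\<in>compositions K N. mult_pmf K N q n * e k (n k))
       = (\<Sum>m\<le>N. of_nat (N choose m) * q k ^ m * (1 - q k) ^ (N - m) * e k m)"
    using marginal[of k K q N "e k"] assms by simp
  then show "p k * (\<Sum>n\<in>compositions K N. mult_pmf K N q n * e k (n k))
       = p k * (\<Sum>m\<le>N. of_nat (N choose m) * q k ^ m * (1 - q k) ^ (N - m) * e k m)" by simp
qed

lemma Fp_nonconst:
  assumes "a \<in> {1..N}" "b \<in> {1..N}" "e k a \<noteq> e k b"
  shows "pderiv (Fp N e k) \<noteq> 0"
proof
  assume "pderiv (Fp N e k) = 0"
  then have "degree (Fp N e k) = 0" by (simp add: pderiv_eq_0_iff)
  then have cst: "poly (Fp N e k) t = poly (Fp N e k) 0" for t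
    by (subst (1 2) degree_0_id[symmetric]) simp_all
  have p0: "poly (Fp N e k) 0 = e k 0"
  proof -
    have "poly (Fp N e k) 0 = (\<Sum>m\<le>N. (if m = 0 then e k 0 else 0))"
      unfolding poly_Fp by (rule sum.cong) auto
    then show ?thesis by simp
  qed
  define c where "c m = of_nat (N choose m) * (e k m - e k 0)" for m
  have root: "(\<Sum>m\<le>N. c m * x ^ m) = 0" if x: "x > 0" for x :: real
  proof -
    define t where "t = x / (1 + x)"
    have x1: "1 + x \<noteq> 0" using x by simp
    have w: "(1 + x) ^ N * (t ^ m * (1 - t) ^ (N - m)) = x ^ m" if m: "m \<le> N" for m
    proof -
      have "1 - t = 1 / (1 + x)" unfolding t_def using x1 by (simp add: field_simps)
      then have "(1 + x) ^ N * (t ^ m * (1 - t) ^ (N - m)) = (1 + x) ^ (m + (N - m)) * (x ^ m / (1 + x) ^ m * (1 / (1 + x) ^ (N - m)))"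
        using m by (simp add: t_def power_divide)
      also have "\<dots> = x ^ m" using x1 by (simp add: power_add field_simps)
      finally show ?thesis .
    qed
    have bin: "(\<Sum>m\<le>N. of_nat (N choose m) * t ^ m * (1 - t) ^ (N - m)) = 1"
      using binomial_ring[of t "1 - t" N] by simp
    have "(\<Sum>m\<le>N. of_nat (N choose m) * t ^ m * (1 - t) ^ (N - m) * e k m) = e k 0"
      using cst[of t] p0 unfolding poly_Fp by simp
    moreover have "(\<Sum>m\<le>N. of_nat (N choose m) * t ^ m * (1 - t) ^ (N - m) * e k 0) = e k 0"
      using bin by (simp only: sum_distrib_right[symmetric])
    moreover have "(\<Sum>m\<le>N. of_nat (N choose m) * t ^ m * (1 - t) ^ (N - m) * (e k m - e k 0))
       = (\<Sum>m\<le>N. of_nat (N choose m) * t ^ m * (1 - t) ^ (N - m) * e k m)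
         - (\<Sum>m\<le>N. of_nat (N choose m) * t ^ m * (1 - t) ^ (N - m) * e k 0)"
      by (simp only: right_diff_distrib sum_subtractf)
    ultimately have "(\<Sum>m\<le>N. of_nat (N choose m) * t ^ m * (1 - t) ^ (N - m) * (e k m - e k 0)) = 0"
      by simp
    then have "(1 + x) ^ N * (\<Sum>m\<le>N. of_nat (N choose m) * t ^ m * (1 - t) ^ (N - m) * (e k m - e k 0)) = 0"
      by simp
    then have "(\<Sum>m\<le>N. c m * ((1 + x) ^ N * (t ^ m * (1 - t) ^ (N - m)))) = 0"
      unfolding sum_distrib_left c_def by (simp add: algebra_simps)
    moreover have "(\<Sum>m\<le>N. c m * ((1 + x) ^ N * (t ^ m * (1 - t) ^ (N - m)))) = (\<Sum>m\<le>N. c m * x ^ m)"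
      by (rule sum.cong[OF refl]) (simp add: w)
    ultimately show ?thesis by simp
  qed
  have "\<not> finite {x::real. (\<Sum>m\<le>N. c m * x ^ m) = 0}"
  proof
    assume "finite {x::real. (\<Sum>m\<le>N. c m * x ^ m) = 0}"
    moreover have "{0<..} \<subseteq> {x::real. (\<Sum>m\<le>N. c m * x ^ m) = 0}" using root by auto
    ultimately have "finite {0::real<..}" by (rule finite_subset[rotated])
    then show False using infinite_Ioi by blast
  qed
  then have c0: "\<forall>m\<le>N. c m = 0" using polyfun_finite_roots[of c N] by simp
  have E: "e k m = e k 0" if "m \<le> N" for m
  proof -
    have "real (N choose m) \<noteq> 0" using that by simp
    moreover have "c m = 0" using c0 that by blast
    then have "real (N choose m) * (e k m - e k 0) = 0" by (simp only: c_def)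
    ultimately show ?thesis by simp
  qed
  have "a \<le> N" "b \<le> N" using assms(1,2) by auto
  then show False using E[of a] E[of b] assms(3) by argo
qed



lemma compact_simplex: "compact (prob_simplex K)"
proof -
  define S where "S i = (if i < K then {0..1} else {0::real})" for i :: nat
  have cB: "compact (Pi\<^sub>E UNIV S)"
  proof -
    have "compactin (product_topology (\<lambda>_. euclidean) UNIV) (Pi\<^sub>E UNIV S)"
      by (subst compactin_PiE) (auto simp: S_def)
    then show ?thesis by (simp add: euclidean_product_topology)
  qed
  have cC: "closed (prob_simplex K)"
  proof -
    have "prob_simplex K = (\<Inter>i\<in>{..<K}. {f. 0 \<le> f i}) \<inter> (\<Inter>i\<in>{K..}. {f. f i = 0}) \<inter> {f. (\<Sum>i<K. f i) = 1}"
      by (auto simp: prob_simplex_def)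
    moreover have "closed {f :: nat \<Rightarrow> real. 0 \<le> f i}" for i
      by (rule closed_Collect_le) (auto intro: continuous_intros)
    moreover have "closed {f :: nat \<Rightarrow> real. f i = 0}" for i
      by (rule closed_Collect_eq) (auto intro: continuous_intros)
    moreover have "closed {f :: nat \<Rightarrow> real. (\<Sum>i<K. f i) = 1}"
      by (rule closed_Collect_eq) (auto intro: continuous_intros)
    ultimately show ?thesis by (auto intro!: closed_Int closed_INT)
  qed
  have "prob_simplex K \<subseteq> Pi\<^sub>E UNIV S"
  proof
    fix f assume f: "f \<in> prob_simplex K"
    have "f i \<in> S i" for i
    proof (cases "i < K")
      case True
      have "f i \<le> (\<Sum>j<K. f j)" using f True by (intro member_le_sum) (auto simp: prob_simplex_def)
      then show ?thesis using f True by (auto simp: prob_simplex_def S_def)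
    qed (use f in \<open>auto simp: prob_simplex_def S_def\<close>)
    then show "f \<in> Pi\<^sub>E UNIV S" by auto
  qed
  then have "prob_simplex K = Pi\<^sub>E UNIV S \<inter> prob_simplex K" by blast
  then show ?thesis using compact_Int_closed[OF cB cC] by simp
qed

lemma simplex_sum: "q \<in> prob_simplex K \<Longrightarrow> (\<Sum>i<K. q i) = 1"
  by (simp add: prob_simplex_def)

lemma exists_min:
  assumes "p \<in> prob_simplex K"
  shows "\<exists>q\<in>prob_simplex K. \<forall>r\<in>prob_simplex K. L_N K N e p q \<le> L_N K N e p r"
proof (rule continuous_attains_inf[OF compact_simplex])
  show "prob_simplex K \<noteq> {}" using assms by blast
  have "continuous_on (prob_simplex K) (\<lambda>q. \<Sum>k<K. p k * poly (Fp N e k) (q k))"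
    by (intro continuous_intros) (auto intro: continuous_on_subset[OF continuous_on_product_coordinates])
  then show "continuous_on (prob_simplex K) (L_N K N e p)"
    by (rule continuous_on_cong[THEN iffD1, rotated 2]) (auto simp: L_decomp simplex_sum)
qed

definition Rf :: "nat \<Rightarrow> (nat \<Rightarrow> nat \<Rightarrow> real) \<Rightarrow> nat \<Rightarrow> real \<Rightarrow> real" where
  "Rf N e k t = t * poly (pderiv (Fp N e k)) t"

lemma improve:
  assumes p: "p \<in> prob_simplex K" and pos: "\<forall>i<K. 0 < p i"
    and ab: "a < K" "b < K" "a \<noteq> b" and R: "Rf N e a (p a) \<noteq> Rf N e b (p b)"
  shows "\<exists>q\<in>prob_simplex K. L_N K N e p q < L_N K N e p p"
proof -
  define c where "c i = (if i = a then 1 else if i = b then -1 else (0::real))" for i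
  define qs where "qs s = (\<lambda>i. p i + c i * s)" for s
  define \<phi> where "\<phi> s = (\<Sum>k<K. p k * poly (Fp N e k) (p k + c k * s))" for s
  have qsimp: "qs s \<in> prob_simplex K" if "- p a \<le> s" "s \<le> p b" for s
  proof -
    have "(\<Sum>i<K. c i * s) = 0"
    proof -
      have "(\<Sum>i<K. c i * s) = (\<Sum>i<K. (if i = a then s else 0)) + (\<Sum>i<K. (if i = b then - s else 0))"
        by (subst sum.distrib[symmetric], rule sum.cong) (auto simp: c_def ab)
      then show ?thesis using ab by simp
    qed
    moreover have "0 \<le> p i + c i * s" if "i < K" for i
      using that pos \<open>- p a \<le> s\<close> \<open>s \<le> p b\<close> by (auto simp: c_def)
    ultimately show ?thesis using p ab
      by (auto simp: prob_simplex_def qs_def sum.distrib c_def)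
  qed
  have Lphi: "L_N K N e p (qs s) = \<phi> s" if "- p a \<le> s" "s \<le> p b" for s
    using qsimp[OF that] by (simp add: L_decomp simplex_sum \<phi>_def qs_def)
  have qs0: "qs 0 = p" by (simp add: qs_def)
  define D where "D = Rf N e a (p a) - Rf N e b (p b)"
  have "DERIV \<phi> 0 :> (\<Sum>k<K. p k * (poly (pderiv (Fp N e k)) (p k + c k * 0) * (0 + c k * 1)))"
    unfolding \<phi>_def
    by (intro derivative_eq_intros DERIV_chain2[OF poly_DERIV]) auto
  moreover have "(\<Sum>k<K. p k * (poly (pderiv (Fp N e k)) (p k + c k * 0) * (0 + c k * 1))) = D"
  proof -
    have "(\<Sum>k<K. p k * (poly (pderiv (Fp N e k)) (p k + c k * 0) * (0 + c k * 1)))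
      = (\<Sum>k<K. (if k = a then Rf N e a (p a) else 0)) + (\<Sum>k<K. (if k = b then - Rf N e b (p b) else 0))"
      by (subst sum.distrib[symmetric], rule sum.cong) (auto simp: c_def ab Rf_def)
    then show ?thesis using ab by (simp add: D_def)
  qed
  ultimately have dphi: "DERIV \<phi> 0 :> D" by simp
  have "D \<noteq> 0" using R by (simp add: D_def)
  then consider "D > 0" | "D < 0" by linarith
  then obtain s where s: "- p a \<le> s" "s \<le> p b" "\<phi> s < \<phi> 0"
  proof cases
    case 1
    from DERIV_pos_inc_left[OF dphi 1] obtain d where d: "d > 0" "\<forall>h>0. h < d \<longrightarrow> \<phi> (0 - h) < \<phi> 0" by blast
    define h where "h = min d (p a) / 2"
    have "h > 0" "h < d" "h \<le> p a" using d pos ab by (auto simp: h_def)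
    then show ?thesis using that[of "- h"] d pos ab by auto
  next
    case 2
    from DERIV_neg_dec_right[OF dphi 2] obtain d where d: "d > 0" "\<forall>h>0. h < d \<longrightarrow> \<phi> 0 > \<phi> (0 + h)" by blast
    define h where "h = min d (p b) / 2"
    have "h > 0" "h < d" "h \<le> p b" using d pos ab by (auto simp: h_def)
    then show ?thesis using that[of "h"] d pos ab by auto
  qed
  have "0 \<le> p a" "0 \<le> p b" using pos ab by auto
  then have "L_N K N e p (qs 0) = \<phi> 0" using Lphi[of 0] by simp
  then have p0: "L_N K N e p p = \<phi> 0" unfolding qs0 .
  have "L_N K N e p (qs s) < L_N K N e p p"
    using Lphi[OF s(1,2)] p0 s(3) by simp
  then show ?thesis using qsimp[OF s(1,2)] by blast
qed



lemma null_by_slice: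
  fixes I :: "nat set" and S :: "(nat \<Rightarrow> real) set"
  assumes fin: "finite I" and i: "i \<in> I" and S: "S \<in> sets (Pi\<^sub>M I (\<lambda>_. lborel))"
    and sl: "\<And>x. finite {t. x(i:=t) \<in> S}"
  shows "S \<in> null_sets (Pi\<^sub>M I (\<lambda>_. lborel))"
proof -
  interpret product_sigma_finite "\<lambda>_. lborel" by standard
  define J where "J = I - {i}"
  have IJ: "I = insert i J" "i \<notin> J" "finite J" using i fin by (auto simp: J_def)
  have "emeasure (Pi\<^sub>M I (\<lambda>_. lborel)) S = (\<integral>\<^sup>+ x. indicator S x \<partial>Pi\<^sub>M I (\<lambda>_. lborel))"
    using S by simp
  also have "\<dots> = (\<integral>\<^sup>+ x. (\<integral>\<^sup>+ y. indicator S (x(i := y)) \<partial>lborel) \<partial>Pi\<^sub>M J (\<lambda>_. lborel))"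
    unfolding IJ(1) by (rule product_nn_integral_insert[OF IJ(3,2)]) (use S IJ(1) in simp)
  also have "\<dots> = 0"
  proof -
    have inner: "(\<integral>\<^sup>+ y. indicator S (x(i := y)) \<partial>lborel) = 0" for x :: "nat \<Rightarrow> real"
    proof -
    have n: "{t. x(i:=t) \<in> S} \<in> null_sets lborel"
      by (rule countable_imp_null_set_lborel[OF countable_finite[OF sl]])
    have "(\<integral>\<^sup>+ y. indicator S (x(i := y)) \<partial>lborel) = (\<integral>\<^sup>+ y. indicator {t. x(i:=t) \<in> S} y \<partial>lborel)"
      by (rule nn_integral_cong) (simp add: indicator_def)
    also have "\<dots> = emeasure lborel {t. x(i:=t) \<in> S}" using null_setsD2[OF n] by (intro nn_integral_indicator) simp
    also have "\<dots> = 0" by (rule null_setsD1[OF n])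
    finally show "(\<integral>\<^sup>+ y. indicator S (x(i := y)) \<partial>lborel) = 0" .
  qed
  show ?thesis by (simp add: inner)
  qed
  finally show ?thesis using S by (simp add: null_sets_def)
qed



lemma chart_meas: "(\<lambda>x. simplex_chart K x i) \<in> borel_measurable (Pi\<^sub>M {..<K - 1} (\<lambda>_. lborel))"
proof (cases "i < K - 1")
  case True
  then show ?thesis unfolding simplex_chart_def by simp
next
  case False
  then show ?thesis unfolding simplex_chart_def by (cases "i = K - 1") simp_all
qed

lemma Rf_cont: "continuous_on UNIV (Rf N e k)"
  unfolding Rf_def by (intro continuous_intros)

lemma Rf_meas: "(\<lambda>x. Rf N e k (simplex_chart K x i)) \<in> borel_measurable (Pi\<^sub>M {..<K - 1} (\<lambda>_. lborel))"
  using measurable_compose[OF chart_meas borel_measurable_continuous_onI[OF Rf_cont]] by simp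

lemma Rf_finite:
  assumes "pderiv (Fp N e k) \<noteq> 0"
  shows "finite {t. Rf N e k t = c}"
proof -
  have "{t. Rf N e k t = c} = {t. poly (pCons (-c) (pderiv (Fp N e k))) t = 0}"
    by (auto simp: Rf_def algebra_simps)
  moreover have "pCons (-c) (pderiv (Fp N e k)) \<noteq> 0" using assms by simp
  ultimately show ?thesis using poly_roots_finite by metis
qed


lemma main_meas:
  fixes k0 b0 :: nat
  assumes K: "K > 0"
  shows "{x \<in> space (Pi\<^sub>M {..<K - 1} (\<lambda>_. lborel)). (\<forall>i<K. 0 \<le> simplex_chart K x i) \<and>
     ((\<exists>k<K. simplex_chart K x k = 0) \<or> Rf N e k0 (simplex_chart K x k0) = Rf N e b0 (simplex_chart K x b0))}
     \<in> sets (Pi\<^sub>M {..<K - 1} (\<lambda>_. lborel))" (is "?S \<in> sets ?M")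
proof -
  define S1 where "S1 i = {x \<in> space ?M. 0 \<le> simplex_chart K x i}" for i
  define S2 where "S2 i = {x \<in> space ?M. simplex_chart K x i = 0}" for i
  define S3 where "S3 = {x \<in> space ?M. Rf N e k0 (simplex_chart K x k0) = Rf N e b0 (simplex_chart K x b0)}"
  have s1: "S1 i \<in> sets ?M" for i
    unfolding S1_def by (rule borel_measurable_le[OF borel_measurable_const chart_meas])
  have s2: "S2 i \<in> sets ?M" for i
    unfolding S2_def by (rule borel_measurable_eq[OF chart_meas borel_measurable_const])
  have s3: "S3 \<in> sets ?M"
    unfolding S3_def by (rule borel_measurable_eq[OF Rf_meas Rf_meas])
  have "?S = (\<Inter>i\<in>{..<K}. S1 i) \<inter> ((\<Union>i\<in>{..<K}. S2 i) \<union> S3)"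
    using K by (auto simp: S1_def S2_def S3_def)
  also have "\<dots> \<in> sets ?M"
    using s1 s2 s3 K by (intro sets.Int sets.Un sets.finite_INT sets.finite_UN) auto
  finally show ?thesis .
qed

lemma chart_simplex:
  assumes "K > 0"
  shows "simplex_chart K x \<in> prob_simplex K \<longleftrightarrow> (\<forall>i<K. 0 \<le> simplex_chart K x i)"
proof -
  have "(\<Sum>i<K. simplex_chart K x i) = 1"
  proof -
    have "{..<K} = insert (K - 1) {..<K - 1}" using assms by auto
    then have "(\<Sum>i<K. simplex_chart K x i) = simplex_chart K x (K - 1) + (\<Sum>i<K - 1. simplex_chart K x i)"
      by simp
    also have "(\<Sum>i<K - 1. simplex_chart K x i) = (\<Sum>i<K - 1. x i)"
      by (rule sum.cong) (auto simp: simplex_chart_def)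
    finally show ?thesis by (simp add: simplex_chart_def)
  qed
  moreover have "simplex_chart K x i = 0" if "K \<le> i" for i
    using that assms by (auto simp: simplex_chart_def)
  ultimately show ?thesis by (auto simp: prob_simplex_def)
qed

lemma sum_upd:
  fixes x :: "nat \<Rightarrow> real"
  assumes "i \<in> A" "finite A"
  shows "(\<Sum>j\<in>A. (x(i:=t)) j) = t + (\<Sum>j\<in>A - {i}. x j)"
proof -
  have "(\<Sum>j\<in>A. (x(i:=t)) j) = (x(i:=t)) i + (\<Sum>j\<in>A - {i}. (x(i:=t)) j)"
    by (rule sum.remove[OF assms(2,1)])
  also have "(\<Sum>j\<in>A - {i}. (x(i:=t)) j) = (\<Sum>j\<in>A - {i}. x j)" by (rule sum.cong) auto
  finally show ?thesis by simp
qed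

theorem corollary7p4:
  fixes K N :: nat and e :: "nat \<Rightarrow> nat \<Rightarrow> real"
  assumes "K \<ge> 3" and "N \<ge> 1"
    and "\<exists>k<K. \<exists>a\<in>{1..N}. \<exists>b\<in>{1..N}. e k a \<noteq> e k b"
  shows "\<exists>U. U \<subseteq> prob_simplex K \<and> simplex_null K U \<and>
           (\<forall>p\<in>prob_simplex K - U. \<exists>q. q \<in> prob_simplex K \<and> q \<noteq> p \<and>
              L_N K N e p q = L_star K N e p \<and> L_star K N e p < L_same K N e p)"
proof -
  from assms(3) obtain k0 a b where k0: "k0 < K" and ab: "a \<in> {1..N}" "b \<in> {1..N}" "e k0 a \<noteq> e k0 b"
    by blast
  have nc: "pderiv (Fp N e k0) \<noteq> 0" by (rule Fp_nonconst[of a N b e k0, OF ab])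
  define b0 where "b0 = (if k0 = 0 then 1 else (0::nat))"
  have b0: "b0 < K - 1" "b0 \<noteq> k0" using assms(1) by (auto simp: b0_def)
  define U where "U = {p \<in> prob_simplex K. (\<exists>k<K. p k = 0) \<or> Rf N e k0 (p k0) = Rf N e b0 (p b0)}"
  define M where "M = Pi\<^sub>M {..<K - 1} (\<lambda>_. lborel :: real measure)"
  have K0: "K > 0" using assms(1) by simp
  define P where "P = {x \<in> space M. simplex_chart K x \<in> U}"
  have P_eq: "P = {x \<in> space M. (\<forall>i<K. 0 \<le> simplex_chart K x i) \<and>
     ((\<exists>k<K. simplex_chart K x k = 0) \<or> Rf N e k0 (simplex_chart K x k0) = Rf N e b0 (simplex_chart K x b0))}"
    unfolding P_def U_def using chart_simplex[OF K0] by auto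
  have Psets: "P \<in> sets M" unfolding P_eq M_def by (rule main_meas[OF K0])
  define Z where "Z k = {x \<in> space M. x k = (0::real)}" for k
  define W where "W = {x \<in> space M. (\<Sum>j<K - 1. x j) = (1::real)}"
  define V where "V = {x \<in> space M. Rf N e k0 (simplex_chart K x k0) = Rf N e b0 (simplex_chart K x b0)}"
  have finI: "finite {..<K - 1}" by simp
  have Z: "Z k \<in> null_sets M" if k: "k < K - 1" for k
  proof -
    have "Z k \<in> sets M" unfolding Z_def M_def
      by (rule borel_measurable_eq) (use k in simp_all)
    moreover have "finite {t. x(k:=t) \<in> Z k}" for x
      by (rule finite_subset[of _ "{0}"]) (auto simp: Z_def)
    ultimately show ?thesis unfolding M_def
      by (intro null_by_slice[OF finI]) (use k in \<open>simp_all add: M_def\<close>)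
  qed
  have W: "W \<in> null_sets M"
  proof -
    have i0: "0 \<in> {..<K - 1}" using assms(1) by simp
    have "W \<in> sets M" unfolding W_def M_def
      by (rule borel_measurable_eq) simp_all
    moreover have "finite {t. x(0:=t) \<in> W}" for x :: "nat \<Rightarrow> real"
    proof (rule finite_subset[of _ "{1 - (\<Sum>j\<in>{..<K - 1} - {0}. x j)}"])
      show "{t. x(0:=t) \<in> W} \<subseteq> {1 - (\<Sum>j\<in>{..<K - 1} - {0}. x j)}"
      proof
        fix t assume "t \<in> {t. x(0:=t) \<in> W}"
        then have "(\<Sum>j<K - 1. (x(0:=t)) j) = 1" unfolding W_def by blast
        then have "t + (\<Sum>j\<in>{..<K - 1} - {0}. x j) = 1" by (simp only: sum_upd[OF i0 finI])
        then show "t \<in> {1 - (\<Sum>j\<in>{..<K - 1} - {0}. x j)}" by simp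
      qed
    qed simp
    ultimately show ?thesis unfolding M_def
      by (intro null_by_slice[OF finI i0]) (simp_all add: M_def)
  qed
  have V: "V \<in> null_sets M"
  proof -
    have Vs: "V \<in> sets M" unfolding V_def M_def
      by (rule borel_measurable_eq[OF Rf_meas Rf_meas])
    show ?thesis
    proof (cases "k0 < K - 1")
      case True
      have "finite {t. x(k0:=t) \<in> V}" for x :: "nat \<Rightarrow> real"
      proof (rule finite_subset[OF _ Rf_finite[OF nc, of "Rf N e b0 (x b0)"]])
        show "{t. x(k0:=t) \<in> V} \<subseteq> {t. Rf N e k0 t = Rf N e b0 (x b0)}"
          using True b0 by (auto simp: V_def simplex_chart_def)
      qed
      then show ?thesis unfolding M_def using Vs True
        by (intro null_by_slice[OF finI, of k0]) (simp_all add: M_def)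
    next
      case False
      then have k0K: "k0 = K - 1" using k0 by simp
      have i1: "1 \<in> {..<K - 1}" using assms(1) by simp
      have "finite {t. x(1:=t) \<in> V}" for x :: "nat \<Rightarrow> real"
      proof -
        define r where "r = (\<Sum>j\<in>{..<K - 1} - {1}. x j)"
        define c where "c = Rf N e b0 (x 0)"
        have "{t. x(1:=t) \<in> V} \<subseteq> (\<lambda>t. 1 - (t + r)) -` {s. Rf N e k0 s = c}"
        proof
          fix t assume "t \<in> {t. x(1:=t) \<in> V}"
          then have "Rf N e k0 (simplex_chart K (x(1:=t)) k0) = Rf N e b0 (simplex_chart K (x(1:=t)) b0)"
            unfolding V_def by blast
          moreover have "simplex_chart K (x(1:=t)) k0 = 1 - (t + r)"
          proof -
            have su: "(\<Sum>j<K - 1. (x(1:=t)) j) = t + r" unfolding r_def by (rule sum_upd[OF i1 finI])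
            have "simplex_chart K (x(1:=t)) k0 = 1 - (\<Sum>j<K - 1. (x(1:=t)) j)"
              using k0K by (simp add: simplex_chart_def del: fun_upd_apply)
            then show ?thesis using su by simp
          qed
          moreover have "simplex_chart K (x(1:=t)) b0 = x 0"
            using k0K assms(1) by (simp add: simplex_chart_def b0_def)
          ultimately show "t \<in> (\<lambda>t. 1 - (t + r)) -` {s. Rf N e k0 s = c}" by (simp add: c_def)
        qed
        moreover have "finite ((\<lambda>t. 1 - (t + r)) -` {s. Rf N e k0 s = c})"
          by (rule finite_vimageI[OF Rf_finite[OF nc]]) (auto simp: inj_on_def)
        ultimately show ?thesis by (rule finite_subset)
      qed
      then show ?thesis unfolding M_def using Vs
        by (intro null_by_slice[OF finI i1]) (simp_all add: M_def)
    qed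
  qed
  have sub: "P \<subseteq> (\<Union>k\<in>{..<K - 1}. Z k) \<union> W \<union> V"
  proof
    fix x assume x: "x \<in> P"
    then have xs: "x \<in> space M" and xU: "simplex_chart K x \<in> U" by (auto simp: P_def)
    from xU have "(\<exists>k<K. simplex_chart K x k = 0) \<or> Rf N e k0 (simplex_chart K x k0) = Rf N e b0 (simplex_chart K x b0)"
      by (simp add: U_def)
    then show "x \<in> (\<Union>k\<in>{..<K - 1}. Z k) \<union> W \<union> V"
    proof
      assume "\<exists>k<K. simplex_chart K x k = 0"
      then obtain k where k: "k < K" "simplex_chart K x k = 0" by blast
      show ?thesis
      proof (cases "k < K - 1")
        case True
        then show ?thesis using k xs by (auto simp: Z_def simplex_chart_def)
      next
        case False
        then have "k = K - 1" using k by simp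
        then show ?thesis using k xs by (auto simp: W_def simplex_chart_def)
      qed
    next
      assume "Rf N e k0 (simplex_chart K x k0) = Rf N e b0 (simplex_chart K x b0)"
      then show ?thesis using xs by (auto simp: V_def)
    qed
  qed
  have "(\<Union>k\<in>{..<K - 1}. Z k) \<union> W \<union> V \<in> null_sets M"
    using Z W V by (intro null_sets.Un null_sets_UN') auto
  then have Pnull: "P \<in> null_sets M" using Psets sub by (rule null_sets_subset)
  have "simplex_null K U" unfolding simplex_null_def using Pnull by (simp add: P_def M_def)
  moreover have "U \<subseteq> prob_simplex K" by (auto simp: U_def)
  moreover have "\<exists>q. q \<in> prob_simplex K \<and> q \<noteq> p \<and>
              L_N K N e p q = L_star K N e p \<and> L_star K N e p < L_same K N e p"
    if p: "p \<in> prob_simplex K - U" for p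
  proof -
    have ps: "p \<in> prob_simplex K" using p by simp
    have pos: "\<forall>i<K. 0 < p i"
    proof (intro allI impI)
      fix i assume "i < K"
      then have "0 \<le> p i" "p i \<noteq> 0" using p by (auto simp: U_def prob_simplex_def)
      then show "0 < p i" by simp
    qed
    have R: "Rf N e k0 (p k0) \<noteq> Rf N e b0 (p b0)" using p by (auto simp: U_def)
    obtain q' where q': "q' \<in> prob_simplex K" "L_N K N e p q' < L_N K N e p p"
    proof -
      have "b0 < K" "k0 \<noteq> b0" using b0 by auto
      from improve[OF ps pos k0 this R] show ?thesis using that by blast
    qed
    obtain q where q: "q \<in> prob_simplex K" "\<forall>r\<in>prob_simplex K. L_N K N e p q \<le> L_N K N e p r"
      using exists_min[OF ps] by blast
    have Ls: "L_star K N e p = L_N K N e p q"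
      unfolding L_star_def by (rule cInf_eq_minimum) (use q in auto)
    have lt: "L_N K N e p q < L_N K N e p p" using q(2) q' by force
    then have "q \<noteq> p" by auto
    then show ?thesis using q(1) Ls lt by (auto simp: L_same_def)
  qed
  ultimately show ?thesis by blast
qed

end
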